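(* Let $(B,\lfloor\cdot,\cdot\rfloor,\|\cdot\|)$ be an SSDB space with quadratic form $q$, and let $f:B\to\mathbb{R}\cup\{+\infty\}$ be a minimal element (with respect to the pointwise order) of the set of convex functions $g:B\to\mathbb{R}\cup\{+\infty\}$ satisfying $g\ge q$ on $B$. Then there is a maximally $q$-positive set $M\subset B$ such that $f=\Phi_M$.
   Context: An SSD space is a pair $(B,\lfloor\cdot,\cdot\rfloor)$ with $B$ a nonzero real vector space and $\lfloor\cdot,\cdot\rfloor$ a symmetric bilinear form; $q(b)=\frac12\lfloor b,b\rfloor$. An SSDB space is a triple $(B,\lfloor\cdot,\cdot\rfloor,\|\cdot\|)$ such that $(B,\lfloor\cdot,\cdot\rfloor)$ is an SSD space, $(B,\|\cdot\|)$ is a Banach space, and $i:B\to B^*$, $i(b)=\lfloor\cdot,b\rfloor$, is a surjective isometry onto $B^*$. A nonempty $A\subset B$ is $q$-positive if $q(b-c)\ge0$ for all $b,c\in A$; maximally $q$-positive if $q$-positive and not properly contained in another $q$-positive set. For nonempty $A$, $\Phi_A(x)=\sup_{a\in A}\{\lfloor x,a\rfloor-q(a)\}$. *)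

theory Defs
  imports "HOL-Analysis.Analysis"
begin

definition SSD :: "('a::real_vector \<Rightarrow> 'a \<Rightarrow> real) \<Rightarrow> bool" where
  "SSD bf \<longleftrightarrow> (\<exists>b::'a. b \<noteq> 0) \<and> bilinear bf \<and> (\<forall>x y. bf x y = bf y x)"

text \<open>SSDB space: SSD space on a Banach space such that i(b) = bf(.,b) is a
  surjective isometry of B onto its dual B* (bounded linear functionals,
  normed by the operator norm).\<close>
definition SSDB :: "('a::banach \<Rightarrow> 'a \<Rightarrow> real) \<Rightarrow> bool" where
  "SSDB bf \<longleftrightarrow> SSD bf
     \<and> (\<forall>b. bounded_linear (\<lambda>x. bf x b))
     \<and> (\<forall>b. onorm (\<lambda>x. bf x b) = norm b)
     \<and> (\<forall>\<phi>::'a \<Rightarrow> real. bounded_linear \<phi> \<longrightarrow> (\<exists>b. \<phi> = (\<lambda>x. bf x b)))"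

definition qf :: "('a \<Rightarrow> 'a \<Rightarrow> real) \<Rightarrow> 'a \<Rightarrow> real" where
  "qf bf b = bf b b / 2"

definition q_positive :: "('a::real_vector \<Rightarrow> 'a \<Rightarrow> real) \<Rightarrow> 'a set \<Rightarrow> bool" where
  "q_positive bf A \<longleftrightarrow> A \<noteq> {} \<and> (\<forall>b\<in>A. \<forall>c\<in>A. qf bf (b - c) \<ge> 0)"

definition max_q_positive :: "('a::real_vector \<Rightarrow> 'a \<Rightarrow> real) \<Rightarrow> 'a set \<Rightarrow> bool" where
  "max_q_positive bf A \<longleftrightarrow> q_positive bf A \<and> (\<forall>A'. q_positive bf A' \<and> A \<subseteq> A' \<longrightarrow> A' = A)"

definition Phi :: "('a \<Rightarrow> 'a \<Rightarrow> real) \<Rightarrow> 'a set \<Rightarrow> 'a \<Rightarrow> ereal" where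
  "Phi bf A x = (SUP a\<in>A. ereal (bf x a - qf bf a))"

text \<open>Convex functions with values in \<real> \<union> {+\<infinity>} (modelled as ereal-valued
  functions never taking the value -\<infinity>).\<close>
definition convex_ext :: "('a::real_vector \<Rightarrow> ereal) \<Rightarrow> bool" where
  "convex_ext g \<longleftrightarrow> (\<forall>x. g x \<noteq> -\<infinity>) \<and>
     (\<forall>x y t. 0 < t \<and> t < 1 \<longrightarrow>
        g (t *\<^sub>R x + (1 - t) *\<^sub>R y) \<le> ereal t * g x + ereal (1 - t) * g y)"

definition convex_majorants :: "('a::real_vector \<Rightarrow> 'a \<Rightarrow> real) \<Rightarrow> ('a \<Rightarrow> ereal) set" where
  "convex_majorants bf = {g. convex_ext g \<and> (\<forall>x. ereal (qf bf x) \<le> g x)}"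

end

theory Submission
  imports Defs
begin


definition hb_good :: "('a::real_vector \<Rightarrow> real) \<Rightarrow> ('a \<times> real) set \<Rightarrow> bool" where
 "hb_good p G \<longleftrightarrow> (0,0) \<in> G \<and> (\<forall>x r y s. (x,r)\<in>G \<longrightarrow> (y,s)\<in>G \<longrightarrow> (x+y, r+s) \<in> G)
   \<and> (\<forall>x r c. (x,r)\<in>G \<longrightarrow> (c *\<^sub>R x, c*r) \<in> G) \<and> (\<forall>x r s. (x,r)\<in>G \<longrightarrow> (x,s)\<in>G \<longrightarrow> r = s)
   \<and> (\<forall>x r. (x,r)\<in>G \<longrightarrow> r \<le> p x)"

lemma hb_goodD:
  assumes "hb_good p G"
  shows "(0,0) \<in> G" "\<And>x r y s. (x,r)\<in>G \<Longrightarrow> (y,s)\<in>G \<Longrightarrow> (x+y, r+s) \<in> G"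
    "\<And>x r c. (x,r)\<in>G \<Longrightarrow> (c *\<^sub>R x, c*r) \<in> G" "\<And>x r s. (x,r)\<in>G \<Longrightarrow> (x,s)\<in>G \<Longrightarrow> r = s"
    "\<And>x r. (x,r)\<in>G \<Longrightarrow> r \<le> p x"
  using assms unfolding hb_good_def by simp_all

lemma HB:
  fixes p :: "'a::real_vector \<Rightarrow> real"
  assumes sub: "\<And>x y. p (x+y) \<le> p x + p y" and hom: "\<And>c x. c > 0 \<Longrightarrow> p (c *\<^sub>R x) = c * p x"
  shows "\<exists>\<phi>. linear \<phi> \<and> (\<forall>x. \<phi> x \<le> p x)"
proof -
  have p0: "p 0 = 0" using hom[of 2 0] by simp
  let ?A = "{G. hb_good p G}"
  have "\<exists>M\<in>?A. \<forall>X\<in>?A. M \<subseteq> X \<longrightarrow> X = M"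
  proof (rule Zorn_Lemma2, intro ballI)
    fix C assume C: "C \<in> chains ?A"
    show "\<exists>U\<in>?A. \<forall>X\<in>C. X \<subseteq> U"
    proof (cases "C = {}")
      case True
      have "hb_good p {(0,0)}" unfolding hb_good_def using p0 by auto
      then show ?thesis using True by auto
    next
      case False
      have CA: "\<And>X. X \<in> C \<Longrightarrow> hb_good p X" using chainsD2[OF C] by auto
      have ch: "\<And>X Y. X \<in> C \<Longrightarrow> Y \<in> C \<Longrightarrow> X \<subseteq> Y \<or> Y \<subseteq> X" using chainsD[OF C] by blast
      have "hb_good p (\<Union>C)"
        unfolding hb_good_def
      proof (intro conjI allI impI)
        show "(0,0) \<in> \<Union>C" using False hb_goodD(1)[OF CA] by blast
      next
        fix x r y s assume a: "(x,r) \<in> \<Union>C" "(y,s) \<in> \<Union>C"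
        then obtain X Y where X: "X \<in> C" "(x,r) \<in> X" and Y: "Y \<in> C" "(y,s) \<in> Y" by blast
        show "(x+y, r+s) \<in> \<Union>C"
        proof (cases "X \<subseteq> Y")
          case True then have "(x,r) \<in> Y" using X by blast
          from hb_goodD(2)[OF CA[OF Y(1)] this Y(2)] show ?thesis using Y(1) by blast
        next
          case False then have "Y \<subseteq> X" using ch[OF X(1) Y(1)] by blast
          then have "(y,s) \<in> X" using Y by blast
          from hb_goodD(2)[OF CA[OF X(1)] X(2) this] show ?thesis using X(1) by blast
        qed
      next
        fix x r c assume "(x,r) \<in> \<Union>C"
        then obtain X where "X \<in> C" "(x,r) \<in> X" by blast
        then show "(c *\<^sub>R x, c*r) \<in> \<Union>C" using hb_goodD(3)[OF CA] by blast
      next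
        fix x r s assume a: "(x,r) \<in> \<Union>C" "(x,s) \<in> \<Union>C"
        then obtain X Y where X: "X \<in> C" "(x,r) \<in> X" and Y: "Y \<in> C" "(x,s) \<in> Y" by blast
        show "r = s"
        proof (cases "X \<subseteq> Y")
          case True then have "(x,r) \<in> Y" using X by blast
          from hb_goodD(4)[OF CA[OF Y(1)] this Y(2)] show ?thesis .
        next
          case False then have "Y \<subseteq> X" using ch[OF X(1) Y(1)] by blast
          then have "(x,s) \<in> X" using Y by blast
          from hb_goodD(4)[OF CA[OF X(1)] X(2) this] show ?thesis .
        qed
      next
        fix x r assume "(x,r) \<in> \<Union>C"
        then obtain X where "X \<in> C" "(x,r) \<in> X" by blast
        then show "r \<le> p x" using hb_goodD(5)[OF CA] by blast
      qed
      then show ?thesis by blast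
    qed
  qed
  then obtain G where G: "hb_good p G" and Gmax: "\<And>X. hb_good p X \<Longrightarrow> G \<subseteq> X \<Longrightarrow> X = G" by blast
  have G0: "(0,0) \<in> G" and Gadd: "\<And>x r y s. (x,r)\<in>G \<Longrightarrow> (y,s)\<in>G \<Longrightarrow> (x+y, r+s) \<in> G"
    and Gsc: "\<And>x r c. (x,r)\<in>G \<Longrightarrow> (c *\<^sub>R x, c*r) \<in> G"
    and Gfun: "\<And>x r s. (x,r)\<in>G \<Longrightarrow> (x,s)\<in>G \<Longrightarrow> r = s"
    and Gp: "\<And>x r. (x,r)\<in>G \<Longrightarrow> r \<le> p x"
    using hb_goodD[OF G] by blast+
  have dom: "\<exists>r. (x,r) \<in> G" for x
  proof (rule ccontr)
    assume nx: "\<not> (\<exists>r. (x,r) \<in> G)"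
    define S where "S = {r - p (y - x) | y r. (y,r) \<in> G}"
    have Sne: "S \<noteq> {}" using G0 unfolding S_def by blast
    have Sbd: "s' \<le> p (z + x) - s" if "s' \<in> S" "(z,s) \<in> G" for s' z s
    proof -
      obtain y r where yr: "s' = r - p (y - x)" "(y,r) \<in> G" using \<open>s' \<in> S\<close> unfolding S_def by blast
      have "r + s \<le> p (y + z)" using Gp[OF Gadd[OF yr(2) that(2)]] .
      also have "\<dots> \<le> p (y - x) + p (z + x)" using sub[of "y - x" "z + x"] by (simp add: algebra_simps)
      finally show ?thesis using yr by simp
    qed
    define a where "a = Sup S"
    have bdd: "bdd_above S" using Sbd[OF _ G0] unfolding bdd_above_def by blast
    have a_up: "r - p (y - x) \<le> a" if "(y,r) \<in> G" for y r
      unfolding a_def using bdd that by (intro cSup_upper) (auto simp: S_def)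
    have a_lo: "a \<le> p (z + x) - s" if "(z,s) \<in> G" for z s
      unfolding a_def using Sne Sbd[OF _ that] by (intro cSup_least) auto
    define G' where "G' = {(y + c *\<^sub>R x, r + c * a) | y r c. (y,r) \<in> G}"
    have GG': "G \<subseteq> G'" unfolding G'_def by force
    have xG': "(x, a) \<in> G'" unfolding G'_def using G0 by force
    have good: "hb_good p G'"
      unfolding hb_good_def
    proof (intro conjI allI impI)
      show "(0,0) \<in> G'" using GG' G0 by blast
    next
      fix y r z s assume "(y,r) \<in> G'" "(z,s) \<in> G'"
      then obtain y1 r1 c1 y2 r2 c2 where 1: "(y,r) = (y1 + c1 *\<^sub>R x, r1 + c1 * a)" "(y1,r1)\<in>G"
        and 2: "(z,s) = (y2 + c2 *\<^sub>R x, r2 + c2 * a)" "(y2,r2)\<in>G" unfolding G'_def by blast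
      have "(y+z, r+s) = ((y1+y2) + (c1+c2) *\<^sub>R x, (r1+r2) + (c1+c2) * a)"
        using 1 2 by (simp add: algebra_simps)
      then show "(y+z, r+s) \<in> G'" unfolding G'_def using Gadd[OF 1(2) 2(2)] by blast
    next
      fix y r c assume "(y,r) \<in> G'"
      then obtain y1 r1 c1 where 1: "(y,r) = (y1 + c1 *\<^sub>R x, r1 + c1 * a)" "(y1,r1)\<in>G"
        unfolding G'_def by blast
      have "(c *\<^sub>R y, c*r) = (c *\<^sub>R y1 + (c*c1) *\<^sub>R x, c*r1 + (c*c1) * a)"
        using 1 by (simp add: algebra_simps)
      then show "(c *\<^sub>R y, c*r) \<in> G'" unfolding G'_def using Gsc[OF 1(2)] by blast
    next
      fix y r s assume "(y,r) \<in> G'" "(y,s) \<in> G'"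
      then obtain y1 r1 c1 y2 r2 c2 where 1: "(y,r) = (y1 + c1 *\<^sub>R x, r1 + c1 * a)" "(y1,r1)\<in>G"
        and 2: "(y,s) = (y2 + c2 *\<^sub>R x, r2 + c2 * a)" "(y2,r2)\<in>G" unfolding G'_def by blast
      have d: "(y1 - y2, r1 - r2) \<in> G" using Gadd[OF 1(2) Gsc[OF 2(2), of "-1"]] by simp
      have eq: "y1 - y2 = (c2 - c1) *\<^sub>R x" using 1 2 by (simp add: algebra_simps)
      show "r = s"
      proof (cases "c1 = c2")
        case True
        then have "y1 = y2" using eq by simp
        then show ?thesis using Gfun[OF 1(2)] 2(2) 1 2 True by auto
      next
        case False
        have "(inverse (c2 - c1) *\<^sub>R (y1 - y2), inverse (c2 - c1) * (r1 - r2)) \<in> G" using Gsc[OF d] .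
        moreover have "inverse (c2 - c1) *\<^sub>R (y1 - y2) = x" using eq False by simp
        ultimately show ?thesis using nx by auto
      qed
    next
      fix y r assume "(y,r) \<in> G'"
      then obtain y1 r1 c where 1: "(y,r) = (y1 + c *\<^sub>R x, r1 + c * a)" "(y1,r1)\<in>G"
        unfolding G'_def by blast
      have "r1 + c * a \<le> p (y1 + c *\<^sub>R x)"
      proof (cases c "0::real" rule: linorder_cases)
        case less
        define d where "d = - c"
        have d: "d > 0" using less by (simp add: d_def)
        have "(inverse d *\<^sub>R y1, inverse d * r1) \<in> G" using Gsc[OF 1(2)] .
        from a_up[OF this] have "inverse d * r1 - p (inverse d *\<^sub>R y1 - x) \<le> a" .
        then have "d * (inverse d * r1 - p (inverse d *\<^sub>R y1 - x)) \<le> d * a" using d by simp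
        moreover have "d * p (inverse d *\<^sub>R y1 - x) = p (y1 + c *\<^sub>R x)"
          using hom[OF d, of "inverse d *\<^sub>R y1 - x"] d by (simp add: d_def algebra_simps)
        moreover have "d * (inverse d * r1) = r1" using d by simp
        ultimately have "r1 - p (y1 + c *\<^sub>R x) \<le> d * a" by (simp add: right_diff_distrib)
        then show ?thesis by (simp add: d_def)
      next
        case equal then show ?thesis using Gp[OF 1(2)] by simp
      next
        case greater
        have "(inverse c *\<^sub>R y1, inverse c * r1) \<in> G" using Gsc[OF 1(2)] .
        from a_lo[OF this] have "a \<le> p (inverse c *\<^sub>R y1 + x) - inverse c * r1" .
        then have "c * a \<le> c * (p (inverse c *\<^sub>R y1 + x) - inverse c * r1)" using greater by simp
        moreover have "c * p (inverse c *\<^sub>R y1 + x) = p (y1 + c *\<^sub>R x)"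
          using hom[OF greater, of "inverse c *\<^sub>R y1 + x"] greater by (simp add: algebra_simps)
        moreover have "c * (inverse c * r1) = r1" using greater by simp
        ultimately show ?thesis by (simp add: right_diff_distrib)
      qed
      then show "r \<le> p y" using 1 by simp
    qed
    have "G' = G" using Gmax[OF good GG'] .
    then show False using xG' nx by blast
  qed
  define \<phi> where "\<phi> x = (SOME r. (x,r) \<in> G)" for x
  have \<phi>G: "(x, \<phi> x) \<in> G" for x unfolding \<phi>_def using dom[of x] by (rule someI_ex)
  have "linear \<phi>"
  proof (rule linearI)
    fix x y show "\<phi> (x + y) = \<phi> x + \<phi> y" using Gfun[OF \<phi>G Gadd[OF \<phi>G \<phi>G]] by simp
  next
    fix c x show "\<phi> (c *\<^sub>R x) = c *\<^sub>R \<phi> x" using Gfun[OF \<phi>G Gsc[OF \<phi>G]] by simp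
  qed
  moreover have "\<phi> x \<le> p x" for x using Gp[OF \<phi>G] .
  ultimately show ?thesis by blast
qed



lemma sq_norm_convex:
  fixes u v :: "'a::real_normed_vector"
  assumes "0 \<le> a" "a \<le> 1"
  shows "(norm (a *\<^sub>R u + (1-a) *\<^sub>R v))^2 \<le> a * (norm u)^2 + (1-a) * (norm v)^2"
proof -
  have "norm (a *\<^sub>R u + (1-a) *\<^sub>R v) \<le> a * norm u + (1-a) * norm v"
    using norm_triangle_ineq[of "a *\<^sub>R u" "(1-a) *\<^sub>R v"] assms by simp
  then have "(norm (a *\<^sub>R u + (1-a) *\<^sub>R v))^2 \<le> (a * norm u + (1-a) * norm v)^2"
    by (intro power_mono) auto
  also have "\<dots> = a * (norm u)^2 + (1-a) * (norm v)^2 - a*(1-a)*(norm u - norm v)^2"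
    by (simp add: power2_eq_square algebra_simps)
  also have "\<dots> \<le> a * (norm u)^2 + (1-a) * (norm v)^2" using assms by simp
  finally show ?thesis .
qed

lemma sandwich:
  fixes G :: "'a::real_normed_vector \<Rightarrow> real" and D :: "'a set"
  assumes y0: "y0 \<in> D"
    and conv: "\<And>u v t. u\<in>D \<Longrightarrow> v\<in>D \<Longrightarrow> 0 \<le> t \<Longrightarrow> t \<le> 1 \<Longrightarrow>
        t *\<^sub>R u + (1-t) *\<^sub>R v \<in> D \<and> G (t *\<^sub>R u + (1-t) *\<^sub>R v) \<le> t * G u + (1-t) * G v"
    and lb: "\<And>u. u\<in>D \<Longrightarrow> 0 \<le> G u + (norm u)^2/2"
  shows "\<exists>\<phi>. bounded_linear \<phi> \<and> (\<forall>u\<in>D. \<forall>w. \<phi> u - \<phi> w \<le> G u + (norm w)^2/2)"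
proof -
  define S where "S x = {(G y + (norm (y - t *\<^sub>R x))^2/2)/t | t y. 0<t \<and> y\<in>D}" for x
  have Sub: "\<exists>e\<in>S (x1+x2). e \<le> e1 + e2" if E1: "e1 \<in> S x1" and E2: "e2 \<in> S x2" for e1 e2 x1 x2
  proof -
    obtain t1 y1 where 1: "e1 = (G y1 + (norm (y1 - t1 *\<^sub>R x1))^2/2)/t1" "0<t1" "y1\<in>D"
      using E1 unfolding S_def by blast
    obtain t2 y2 where 2: "e2 = (G y2 + (norm (y2 - t2 *\<^sub>R x2))^2/2)/t2" "0<t2" "y2\<in>D"
      using E2 unfolding S_def by blast
    define \<alpha> where "\<alpha> = t2/(t1+t2)"
    define t where "t = t1*t2/(t1+t2)"
    have a0: "0 \<le> \<alpha>" "\<alpha> \<le> 1" using 1 2 by (auto simp: \<alpha>_def)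
    have t0: "0 < t" using 1 2 by (simp add: t_def)
    have at1: "\<alpha> * t1 = t" and at2: "(1-\<alpha>) * t2 = t" using 1 2
      by (auto simp: \<alpha>_def t_def field_simps)
    define y where "y = \<alpha> *\<^sub>R y1 + (1-\<alpha>) *\<^sub>R y2"
    have yD: "y \<in> D" and Gy: "G y \<le> \<alpha> * G y1 + (1-\<alpha>) * G y2"
      using conv[OF 1(3) 2(3) a0] by (auto simp: y_def)
    have "y - t *\<^sub>R (x1 + x2) = \<alpha> *\<^sub>R (y1 - t1 *\<^sub>R x1) + (1-\<alpha>) *\<^sub>R (y2 - t2 *\<^sub>R x2)"
    proof -
      have "\<alpha> *\<^sub>R (y1 - t1 *\<^sub>R x1) + (1-\<alpha>) *\<^sub>R (y2 - t2 *\<^sub>R x2) = y - (\<alpha>*t1) *\<^sub>R x1 - ((1-\<alpha>)*t2) *\<^sub>R x2"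
        by (simp add: y_def algebra_simps)
      then show ?thesis using at1 at2 by (simp add: scaleR_right_distrib)
    qed
    then have N: "(norm (y - t *\<^sub>R (x1 + x2)))^2 \<le> \<alpha> * (norm (y1 - t1 *\<^sub>R x1))^2 + (1-\<alpha>) * (norm (y2 - t2 *\<^sub>R x2))^2"
      using sq_norm_convex[OF a0] by simp
    define e where "e = (G y + (norm (y - t *\<^sub>R (x1 + x2)))^2/2)/t"
    have eS: "e \<in> S (x1+x2)" unfolding S_def e_def using t0 yD by blast
    have "e \<le> (\<alpha> * (G y1 + (norm (y1 - t1 *\<^sub>R x1))^2/2) + (1-\<alpha>) * (G y2 + (norm (y2 - t2 *\<^sub>R x2))^2/2))/t"
      unfolding e_def proof (rule divide_right_mono)
      show "0 \<le> t" using t0 by simp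
    qed (use Gy N in \<open>simp add: algebra_simps diff_divide_distrib add_divide_distrib; linarith\<close>)
    also have "\<dots> = e1 + e2"
    proof -
      have r1: "\<alpha> / t = 1 / t1" using at1 t0 1(2) by (auto simp: field_simps)
      have r2: "(1-\<alpha>) / t = 1 / t2" using at2 t0 2(2) by (auto simp: field_simps)
      have "\<forall>A B. (\<alpha> * A + (1-\<alpha>) * B) / t = (\<alpha> / t) * A + ((1-\<alpha>) / t) * B"
        by (simp add: add_divide_distrib)
      then show ?thesis unfolding r1 r2 1(1) 2(1) by simp
    qed
    finally show ?thesis using eS by blast
  qed
  have Zero: "0 \<le> e" if "e \<in> S 0" for e
    using that lb unfolding S_def by (auto intro!: divide_nonneg_pos)
  have Hom: "c * e \<in> S (c *\<^sub>R x)" if E: "e \<in> S x" and c0: "c > 0" for e c x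
  proof -
    obtain t y where 1: "e = (G y + (norm (y - t *\<^sub>R x))^2/2)/t" "0<t" "y\<in>D"
      using E unfolding S_def by blast
    have "c * e = (G y + (norm (y - (t/c) *\<^sub>R (c *\<^sub>R x)))^2/2)/(t/c)"
      using 1 c0 by simp
    then show ?thesis unfolding S_def
      by (intro CollectI exI[of _ "t/c"] exI[of _ y]) (use 1 c0 in simp)
  qed
  have Sne: "S x \<noteq> {}" for x
  proof -
    have "(G y0 + (norm (y0 - 1 *\<^sub>R x))^2/2)/1 \<in> S x" unfolding S_def
      by (intro CollectI exI[of _ "1"] exI[of _ y0]) (use y0 in simp)
    then show ?thesis by blast
  qed
  have Sbdd: "bdd_below (S x)" for x
  proof -
    obtain e' where e': "e' \<in> S (-x)" using Sne by blast
    have "- e' \<le> e" if E: "e \<in> S x" for e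
    proof -
      obtain e'' where "e'' \<in> S 0" "e'' \<le> e + e'" using Sub[OF E e'] by auto
      then show ?thesis using Zero by fastforce
    qed
    then show ?thesis unfolding bdd_below_def by blast
  qed
  define p where "p x = Inf (S x)" for x
  have p_le: "p x \<le> e" if "e \<in> S x" for e x unfolding p_def using that Sbdd[of x] by (rule cInf_lower)
  have p_ge: "c \<le> p x" if "\<And>e. e \<in> S x \<Longrightarrow> c \<le> e" for c x
    unfolding p_def using Sne that by (rule cInf_greatest)
  have psub: "p (x1+x2) \<le> p x1 + p x2" for x1 x2
  proof -
    have "p (x1+x2) - e2 \<le> p x1" if E2: "e2 \<in> S x2" for e2
    proof (rule p_ge)
      fix e1 assume "e1 \<in> S x1"
      then obtain e where "e \<in> S (x1+x2)" "e \<le> e1 + e2" using Sub[OF _ E2] by blast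
      then show "p (x1+x2) - e2 \<le> e1" using p_le by force
    qed
    then have "p (x1+x2) - p x1 \<le> p x2" by (intro p_ge) force
    then show ?thesis by simp
  qed
  have phom: "p (c *\<^sub>R x) = c * p x" if "c > 0" for c x
  proof (rule antisym)
    have "p (c *\<^sub>R x) / c \<le> p x"
    proof (rule p_ge)
      fix e assume "e \<in> S x"
      then have "p (c *\<^sub>R x) \<le> c * e" using Hom that p_le by blast
      then show "p (c *\<^sub>R x) / c \<le> e" using that by (simp add: divide_le_eq mult.commute)
    qed
    then show "p (c *\<^sub>R x) \<le> c * p x" using that by (simp add: divide_le_eq mult.commute)
  next
    have "c * p x \<le> e" if "e \<in> S (c *\<^sub>R x)" for e
    proof -
      have "inverse c * e \<in> S (inverse c *\<^sub>R (c *\<^sub>R x))" using Hom[OF that, of "inverse c"] \<open>c>0\<close> by simp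
      then have "p x \<le> inverse c * e" using p_le \<open>c>0\<close> by simp
      then show ?thesis using \<open>c>0\<close> by (simp add: field_simps)
    qed
    then show "c * p x \<le> p (c *\<^sub>R x)" by (rule p_ge)
  qed
  obtain \<phi> where lin: "linear \<phi>" and \<phi>p: "\<And>x. \<phi> x \<le> p x" using HB[of p, OF psub phom] by blast
  have key: "\<phi> u - \<phi> w \<le> G u + (norm w)^2/2" if "u \<in> D" for u w
  proof -
    have "(G u + (norm (u - 1 *\<^sub>R (u - w)))^2/2)/1 \<in> S (u - w)" unfolding S_def
      by (intro CollectI exI[of _ "1"] exI[of _ u]) (use that in simp)
    then have "p (u - w) \<le> G u + (norm w)^2/2" using p_le by simp
    then show ?thesis using \<phi>p[of "u - w"] lin by (simp add: linear_diff)
  qed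
  define K where "K = G y0 - \<phi> y0 + 1/2"
  have bnd: "norm (\<phi> x) \<le> norm x * K" for x
  proof (cases "x = 0")
    case True then show ?thesis using lin by (simp add: linear_0)
  next
    case False
    let ?n = "norm x"
    have n: "?n > 0" using False by simp
    have a: "\<phi> y0 - \<phi> (inverse ?n *\<^sub>R x) \<le> G y0 + 1/2" using key[OF y0, of "inverse ?n *\<^sub>R x"] n by simp
    have b: "\<phi> y0 - \<phi> (- inverse ?n *\<^sub>R x) \<le> G y0 + 1/2" using key[OF y0, of "- inverse ?n *\<^sub>R x"] n by simp
    have s1: "\<phi> (inverse ?n *\<^sub>R x) = \<phi> x / ?n" using lin by (simp add: linear_scale divide_inverse mult.commute)
    have s2: "\<phi> (- inverse ?n *\<^sub>R x) = - (\<phi> x / ?n)" using lin s1 by (simp add: linear_neg)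
    have "\<bar>\<phi> x / ?n\<bar> \<le> K" using a b unfolding K_def s1 s2 by linarith
    then have "\<bar>\<phi> x\<bar> / ?n \<le> K" by simp
    then show ?thesis using n by (simp add: divide_le_eq mult.commute)
  qed
  have "bounded_linear \<phi>"
    using lin bnd by (intro bounded_linear_intro[where K=K]) (auto simp: linear_add linear_scale)
  then show ?thesis using key by blast
qed



lemma limit0:
  fixes K d F :: real
  assumes "\<And>t. 0<t \<Longrightarrow> t<1 \<Longrightarrow> K + t*d \<le> F"
  shows "K \<le> F"
proof (rule ccontr)
  assume "\<not> K \<le> F"
  then have e: "K - F > 0" by simp
  define t where "t = min (1/2) ((K - F) / (2 * (\<bar>d\<bar> + 1)))"
  have t: "0 < t" "t < 1" using e by (auto simp: t_def)
  have "t * \<bar>d\<bar> \<le> ((K - F) / (2 * (\<bar>d\<bar> + 1))) * \<bar>d\<bar>"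
    by (rule mult_right_mono) (auto simp: t_def)
  also have "\<dots> \<le> ((K - F) / (2 * (\<bar>d\<bar> + 1))) * (\<bar>d\<bar> + 1)"
    using e by (intro mult_left_mono) auto
  also have "\<dots> = (K - F) / 2" by (simp add: field_simps)
  finally have "t * \<bar>d\<bar> \<le> (K - F)/2" .
  then have "2 * (t * \<bar>d\<bar>) \<le> K - F" by simp
  moreover have "- (t * \<bar>d\<bar>) \<le> t * d" using t by (simp add: abs_if)
  ultimately show False using assms[OF t] e by (simp add: field_simps)
qed

lemma inf_comb:
  fixes A B C :: "real set" and l :: real
  assumes "A \<noteq> {}" "B \<noteq> {}" "bdd_below C" "0 < l" "l < 1"
    and comb: "\<And>a b. a \<in> A \<Longrightarrow> b \<in> B \<Longrightarrow> \<exists>c\<in>C. c \<le> l * a + (1-l) * b"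
  shows "Inf C \<le> l * Inf A + (1-l) * Inf B"
proof -
  have 1: "Inf C \<le> l * a + (1-l) * b" if ab: "a \<in> A" "b \<in> B" for a b
  proof -
    obtain c where "c \<in> C" "c \<le> l * a + (1-l) * b" using comb[OF ab] by blast
    then show ?thesis using cInf_lower[OF _ assms(3)] by fastforce
  qed
  have 2: "Inf C - l * Inf A \<le> (1-l) * b" if b: "b \<in> B" for b
  proof -
    have "(Inf C - (1-l) * b) / l \<le> Inf A"
    proof (rule cInf_greatest[OF assms(1)])
      fix a assume a: "a \<in> A"
      have h: "Inf C \<le> l * a + (1-l) * b" using 1[OF a b] .
      show "(Inf C - (1-l) * b) / l \<le> a"
        by (subst pos_divide_le_eq[OF assms(4)]) (use h in \<open>simp add: algebra_simps\<close>)
    qed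
    then show ?thesis by (subst (asm) pos_divide_le_eq[OF assms(4)]) (simp add: algebra_simps)
  qed
  have "(Inf C - l * Inf A) / (1-l) \<le> Inf B"
  proof (rule cInf_greatest[OF assms(2)])
    fix b assume b: "b \<in> B"
    have h: "Inf C - l * Inf A \<le> (1-l) * b" using 2[OF b] .
    have l1: "0 < 1 - l" using assms(5) by simp
    show "(Inf C - l * Inf A) / (1-l) \<le> b"
      by (subst pos_divide_le_eq[OF l1]) (use h in \<open>simp add: algebra_simps\<close>)
  qed
  moreover have l1: "0 < 1 - l" using assms(5) by simp
  ultimately show ?thesis by (subst (asm) pos_divide_le_eq[OF l1]) (simp add: algebra_simps)
qed

context
  fixes bf :: "'a::banach \<Rightarrow> 'a \<Rightarrow> real"
  assumes S: "SSDB bf"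
begin

lemma bil: "bilinear bf" using S unfolding SSDB_def SSD_def by blast
lemma sym: "bf x y = bf y x" using S unfolding SSDB_def SSD_def by blast
lemma bl: "bounded_linear (\<lambda>x. bf x b)" using S unfolding SSDB_def by blast
lemma on: "onorm (\<lambda>x. bf x b) = norm b" using S unfolding SSDB_def by blast
lemma surj: "bounded_linear \<phi> \<Longrightarrow> \<exists>b. \<phi> = (\<lambda>x. bf x b)" using S unfolding SSDB_def by blast

lemma bnd: "\<bar>bf x b\<bar> \<le> norm x * norm b"
  using onorm[OF bl, of x b] on[of b] by (simp add: mult.commute)

lemma q_bnd: "\<bar>qf bf b\<bar> \<le> (norm b)^2/2"
  using bnd[of b b] by (simp add: qf_def power2_eq_square)

lemma norming:
  assumes "0 \<le> s" "s < norm b"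
  shows "\<exists>x. s * norm x < \<bar>bf x b\<bar>"
proof (rule ccontr)
  assume "\<not> ?thesis"
  then have "\<And>x. norm (bf x b) \<le> s * norm x" by (simp add: not_less)
  then have "onorm (\<lambda>x. bf x b) \<le> s" using assms(1) by (intro onorm_bound) auto
  then show False using on[of b] assms(2) by simp
qed

lemmas bils = bilinear_ladd[OF bil] bilinear_radd[OF bil] bilinear_lmul[OF bil] bilinear_rmul[OF bil]
  bilinear_lsub[OF bil] bilinear_rsub[OF bil] bilinear_lneg[OF bil] bilinear_rneg[OF bil]
  bilinear_lzero[OF bil] bilinear_rzero[OF bil]

lemma q_diff: "qf bf (y - a) = qf bf y - bf y a + qf bf a"
  using sym[of a y] by (simp add: qf_def bils algebra_simps divide_simps)

lemma q_add: "qf bf (x + b) = qf bf x + bf x b + qf bf b"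
  using sym[of b x] by (simp add: qf_def bils algebra_simps)

lemma q_neg: "qf bf (- b) = qf bf b"
  by (simp add: qf_def bils)

lemma q_comb: "qf bf (t *\<^sub>R y + (1-t) *\<^sub>R a) = t * qf bf y + (1-t) * qf bf a - t*(1-t) * qf bf (y - a)"
  using sym[of a y] by (simp add: qf_def bils algebra_simps divide_simps)

context
  fixes f :: "'a \<Rightarrow> ereal"
  assumes maj: "f \<in> convex_majorants bf"
begin

lemma f_ge: "ereal (qf bf x) \<le> f x" using maj unfolding convex_majorants_def by blast
lemma f_ninf: "f x \<noteq> -\<infinity>" using maj unfolding convex_majorants_def convex_ext_def by blast
lemma f_conv: "0<t \<Longrightarrow> t<1 \<Longrightarrow> f (t *\<^sub>R x + (1-t) *\<^sub>R y) \<le> ereal t * f x + ereal (1-t) * f y"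
  using maj unfolding convex_majorants_def convex_ext_def by blast
lemma fD: "f x \<noteq> \<infinity> \<Longrightarrow> f x = ereal (real_of_ereal (f x))"
  using f_ninf[of x] by (cases "f x") auto

lemma Fconv:
  assumes "f u \<noteq> \<infinity>" "f v \<noteq> \<infinity>" "0 \<le> t" "t \<le> 1"
  shows "f (t *\<^sub>R u + (1-t) *\<^sub>R v) \<noteq> \<infinity> \<and>
    real_of_ereal (f (t *\<^sub>R u + (1-t) *\<^sub>R v)) \<le> t * real_of_ereal (f u) + (1-t) * real_of_ereal (f v)"
proof (cases "t = 0 \<or> t = 1")
  case True then show ?thesis using assms by auto
next
  case False
  then have t: "0 < t" "t < 1" using assms by auto
  define U where "U = real_of_ereal (f u)"
  define V where "V = real_of_ereal (f v)"
  have fu: "f u = ereal U" and fv: "f v = ereal V" using fD assms unfolding U_def V_def by auto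
  have le: "f (t *\<^sub>R u + (1-t) *\<^sub>R v) \<le> ereal (t * U + (1-t) * V)"
    using f_conv[OF t, of u v] unfolding fu fv by simp
  then have ne: "f (t *\<^sub>R u + (1-t) *\<^sub>R v) \<noteq> \<infinity>" by auto
  have "real_of_ereal (f (t *\<^sub>R u + (1-t) *\<^sub>R v)) \<le> t * U + (1-t) * V"
    using le fD[OF ne] by (metis ereal_less_eq(3))
  then show ?thesis using ne unfolding U_def V_def by simp
qed

lemma lemB:
  assumes a: "f a = ereal (qf bf a)"
  shows "ereal (bf y a - qf bf a) \<le> f y"
proof (cases "f y = \<infinity>")
  case True then show ?thesis by simp
next
  case False
  define Fy where "Fy = real_of_ereal (f y)"
  have fy: "f y = ereal Fy" using fD[OF False] unfolding Fy_def .
  have "qf bf y - qf bf (y - a) + t * qf bf (y - a) \<le> Fy" if t: "0 < t" "t < 1" for t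
  proof -
    have "ereal (qf bf (t *\<^sub>R y + (1-t) *\<^sub>R a)) \<le> ereal (t * Fy + (1-t) * qf bf a)"
      using order_trans[OF f_ge[of "t *\<^sub>R y + (1-t) *\<^sub>R a"] f_conv[OF t, of y a]] unfolding fy a by simp
    then have "t * qf bf y + (1-t) * qf bf a - t*(1-t) * qf bf (y - a) \<le> t * Fy + (1-t) * qf bf a"
      unfolding q_comb by simp
    then have "t * (qf bf y - (1-t) * qf bf (y - a)) \<le> t * Fy" by (simp add: algebra_simps)
    then have "qf bf y - (1-t) * qf bf (y - a) \<le> Fy" using t by simp
    then show ?thesis by (simp add: algebra_simps)
  qed
  then have "qf bf y - qf bf (y - a) \<le> Fy" by (rule limit0)
  then show ?thesis unfolding fy q_diff by simp
qed

lemma lemA: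
  assumes b: "f b = ereal (qf bf b)" and c: "f c = ereal (qf bf c)"
  shows "0 \<le> qf bf (b - c)"
proof -
  have h: "(0::real) < 1/2" "(1/2::real) < 1" by auto
  have "ereal (qf bf ((1/2) *\<^sub>R b + (1 - 1/2) *\<^sub>R c)) \<le> ereal ((1/2) * qf bf b + (1 - 1/2) * qf bf c)"
    using order_trans[OF f_ge[of "(1/2) *\<^sub>R b + (1 - 1/2) *\<^sub>R c"] f_conv[OF h, of b c]] unfolding b c by simp
  then have "(1/2) * qf bf b + (1 - 1/2) * qf bf c - (1/2)*(1 - 1/2) * qf bf (b - c) \<le> (1/2) * qf bf b + (1 - 1/2) * qf bf c"
    unfolding q_comb by simp
  then show ?thesis by simp
qed

context
  assumes mini: "\<forall>g\<in>convex_majorants bf. (\<forall>x. g x \<le> f x) \<longrightarrow> g = f"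
begin

lemma lemC:
  assumes y0: "f y0 \<noteq> \<infinity>"
    and hz: "\<And>y. f y \<noteq> \<infinity> \<Longrightarrow> bf y z - qf bf z \<le> real_of_ereal (f y)"
  shows "f z = ereal (qf bf z)"
proof -
  define D where "D = {y. f y \<noteq> \<infinity>}"
  define F where "F y = real_of_ereal (f y)" for y
  have fF: "y \<in> D \<Longrightarrow> f y = ereal (F y)" for y using fD unfolding D_def F_def by blast
  have Fq: "y \<in> D \<Longrightarrow> qf bf y \<le> F y" for y using f_ge[of y] fF by fastforce
  define R where "R x = {t * F y + (1-t) * qf bf z | t y. 0 \<le> t \<and> t \<le> 1 \<and> y \<in> D \<and> x = t *\<^sub>R y + (1-t) *\<^sub>R z}" for x
  define g where "g x = (if R x = {} then \<infinity> else ereal (Inf (R x)))" for x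
  have R_lb: "qf bf x \<le> r" if r: "r \<in> R x" for r x
  proof -
    obtain t y where ty: "r = t * F y + (1-t) * qf bf z" "0 \<le> t" "t \<le> 1" "y \<in> D" "x = t *\<^sub>R y + (1-t) *\<^sub>R z"
      using r unfolding R_def by blast
    have A: "0 \<le> F y - bf y z + qf bf z" using hz[of y] ty(4) unfolding D_def F_def by simp
    have B: "0 \<le> F y - qf bf y" using Fq[OF ty(4)] by simp
    have "r - qf bf x = t*(1-t)*(F y - bf y z + qf bf z) + t^2 * (F y - qf bf y)"
      unfolding ty(1) ty(5) q_comb q_diff by (simp add: algebra_simps power2_eq_square)
    moreover have "0 \<le> t*(1-t)*(F y - bf y z + qf bf z) + t^2 * (F y - qf bf y)"
    proof -
      have c1: "0 \<le> t*(1-t)" using ty(2,3) by simp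
      show ?thesis using mult_nonneg_nonneg[OF c1 A] mult_nonneg_nonneg[OF zero_le_power2[of t] B] by simp
    qed
    ultimately show ?thesis by simp
  qed
  have bdd: "bdd_below (R x)" for x using R_lb unfolding bdd_below_def by blast
  have g_ge: "ereal (qf bf x) \<le> g x" for x
    unfolding g_def using R_lb by (auto intro: cInf_greatest)
  have g_le: "g x \<le> f x" for x
  proof (cases "x \<in> D")
    case True
    have "1 * F x + (1-1) * qf bf z \<in> R x" unfolding R_def
      by (intro CollectI exI[of _ 1] exI[of _ x]) (use True in simp)
    then have "F x \<in> R x" by simp
    then have "R x \<noteq> {}" "Inf (R x) \<le> F x" using cInf_lower[OF _ bdd] by auto
    then show ?thesis unfolding g_def fF[OF True] by simp
  next
    case False then show ?thesis unfolding D_def by simp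
  qed
  have y0D: "y0 \<in> D" using y0 unfolding D_def by simp
  have g_z: "g z \<le> ereal (qf bf z)"
  proof -
    have "0 * F y0 + (1-0) * qf bf z \<in> R z" unfolding R_def
      by (intro CollectI exI[of _ 0] exI[of _ y0]) (use y0D in simp)
    then have "qf bf z \<in> R z" by simp
    then have "R z \<noteq> {}" "Inf (R z) \<le> qf bf z" using cInf_lower[OF _ bdd] by auto
    then show ?thesis unfolding g_def by simp
  qed
  have Rcomb: "\<exists>r\<in>R (l *\<^sub>R x1 + (1-l) *\<^sub>R x2). r \<le> l * r1 + (1-l) * r2"
    if r1: "r1 \<in> R x1" and r2: "r2 \<in> R x2" and l: "0 < l" "l < 1" for r1 r2 x1 x2 l
  proof -
    obtain t1 y1 where 1: "r1 = t1 * F y1 + (1-t1) * qf bf z" "0 \<le> t1" "t1 \<le> 1" "y1 \<in> D" "x1 = t1 *\<^sub>R y1 + (1-t1) *\<^sub>R z"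
      using r1 unfolding R_def by blast
    obtain t2 y2 where 2: "r2 = t2 * F y2 + (1-t2) * qf bf z" "0 \<le> t2" "t2 \<le> 1" "y2 \<in> D" "x2 = t2 *\<^sub>R y2 + (1-t2) *\<^sub>R z"
      using r2 unfolding R_def by blast
    define T where "T = l * t1 + (1-l) * t2"
    have T0: "0 \<le> T" and T1: "T \<le> 1" unfolding T_def using 1 2 l
      by (auto intro!: add_nonneg_nonneg mult_nonneg_nonneg convex_bound_le)
    show ?thesis
    proof (cases "T = 0")
      case True
      then have "l * t1 = 0" "(1-l) * t2 = 0" unfolding T_def using 1 2 l
        by (smt (verit) mult_nonneg_nonneg)+
      then have t0: "t1 = 0" "t2 = 0" using l by auto
      have xz: "l *\<^sub>R x1 + (1-l) *\<^sub>R x2 = 0 *\<^sub>R y1 + (1-0) *\<^sub>R z"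
        using 1(5) 2(5) t0 by (simp add: algebra_simps)
      have "0 * F y1 + (1-0) * qf bf z \<in> R (l *\<^sub>R x1 + (1-l) *\<^sub>R x2)"
        unfolding R_def xz by (intro CollectI exI[of _ 0] exI[of _ y1]) (use 1(4) in simp)
      moreover have "0 * F y1 + (1-0) * qf bf z \<le> l * r1 + (1-l) * r2"
        using 1(1) 2(1) t0 by (simp add: algebra_simps)
      ultimately show ?thesis by blast
    next
      case False
      then have Tp: "0 < T" using T0 by simp
      define \<mu> where "\<mu> = l * t1 / T"
      have m1: "T * \<mu> = l * t1" using Tp by (simp add: \<mu>_def)
      have m2: "T * (1-\<mu>) = (1-l) * t2" using Tp by (simp add: \<mu>_def T_def field_simps)
      have m0: "0 \<le> \<mu>" using Tp 1 l by (simp add: \<mu>_def)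
      have "0 \<le> T * (1-\<mu>)" unfolding m2 using l 2 by simp
      then have m1': "\<mu> \<le> 1" using Tp by (simp add: zero_le_mult_iff)
      define y where "y = \<mu> *\<^sub>R y1 + (1-\<mu>) *\<^sub>R y2"
      have yD: "y \<in> D" and Fy: "F y \<le> \<mu> * F y1 + (1-\<mu>) * F y2"
        using Fconv[of y1 y2 \<mu>] 1(4) 2(4) m0 m1' unfolding y_def D_def F_def by auto
      have "T *\<^sub>R y = (l*t1) *\<^sub>R y1 + ((1-l)*t2) *\<^sub>R y2"
        unfolding y_def scaleR_add_right scaleR_scaleR m1 m2 ..
      then have xe: "l *\<^sub>R x1 + (1-l) *\<^sub>R x2 = T *\<^sub>R y + (1-T) *\<^sub>R z"
        unfolding 1(5) 2(5) T_def by (simp add: algebra_simps)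
      have "T * F y + (1-T) * qf bf z \<in> R (l *\<^sub>R x1 + (1-l) *\<^sub>R x2)"
        unfolding R_def xe by (intro CollectI exI[of _ T] exI[of _ y]) (use yD T0 T1 in simp)
      moreover have "T * F y \<le> T * (\<mu> * F y1 + (1-\<mu>) * F y2)" using Fy T0 by (rule mult_left_mono)
      then have "T * F y \<le> (l * t1) * F y1 + ((1-l) * t2) * F y2"
        by (simp add: distrib_left flip: m1 m2 mult.assoc)
      then have "T * F y + (1-T) * qf bf z \<le> l * r1 + (1-l) * r2"
        unfolding 1(1) 2(1) T_def by (simp add: algebra_simps)
      ultimately show ?thesis by blast
    qed
  qed
  have gconv: "convex_ext g"
    unfolding convex_ext_def
  proof (intro conjI allI impI)
    fix x show "g x \<noteq> -\<infinity>" using g_ge[of x] by auto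
  next
    fix x1 x2 and l :: real assume l: "0 < l \<and> l < 1"
    show "g (l *\<^sub>R x1 + (1-l) *\<^sub>R x2) \<le> ereal l * g x1 + ereal (1-l) * g x2"
    proof (cases "R x1 = {} \<or> R x2 = {}")
      case True
      have ne1: "g x1 \<noteq> -\<infinity>" "g x2 \<noteq> -\<infinity>" using g_ge[of x1] g_ge[of x2] by auto
      have eqi: "ereal l * g x1 + ereal (1-l) * g x2 = \<infinity>"
      proof (cases "R x1 = {}")
        case True
        then have "ereal l * g x1 = \<infinity>" using l unfolding g_def by simp
        moreover have "ereal (1-l) * g x2 \<noteq> -\<infinity>" using ne1(2) l
          by (cases "g x2") auto
        ultimately show ?thesis by simp
      next
        case False
        then have "R x2 = {}" using \<open>R x1 = {} \<or> R x2 = {}\<close> by blast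
        then have "ereal (1-l) * g x2 = \<infinity>" using l unfolding g_def by simp
        moreover have "ereal l * g x1 \<noteq> -\<infinity>" using ne1(1) l
          by (cases "g x1") auto
        ultimately show ?thesis by simp
      qed
      show ?thesis unfolding eqi by simp
    next
      case False
      then have ne: "R x1 \<noteq> {}" "R x2 \<noteq> {}" by auto
      obtain r1 r2 where "r1 \<in> R x1" "r2 \<in> R x2" using ne by blast
      then have "R (l *\<^sub>R x1 + (1-l) *\<^sub>R x2) \<noteq> {}" using Rcomb l by blast
      moreover have "Inf (R (l *\<^sub>R x1 + (1-l) *\<^sub>R x2)) \<le> l * Inf (R x1) + (1-l) * Inf (R x2)"
        using inf_comb[OF ne bdd, of l] l Rcomb by blast
      ultimately show ?thesis unfolding g_def using ne by simp
    qed
  qed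
  have "g \<in> convex_majorants bf" unfolding convex_majorants_def using gconv g_ge by blast
  then have "g = f" using mini g_le by blast
  then have "f z \<le> ereal (qf bf z)" using g_z by simp
  then show ?thesis using f_ge[of z] by simp
qed

lemma dom_ne: "\<exists>y0. f y0 \<noteq> \<infinity>"
proof (rule ccontr)
  assume "\<not> ?thesis"
  then have inf: "f x = \<infinity>" for x by blast
  define j where "j x = ereal ((norm x)^2/2)" for x :: 'a
  have "convex_ext j" unfolding convex_ext_def
  proof (intro conjI allI impI)
    fix x show "j x \<noteq> -\<infinity>" by (simp add: j_def)
  next
    fix x y :: 'a and t :: real assume t: "0 < t \<and> t < 1"
    have "(norm (t *\<^sub>R x + (1-t) *\<^sub>R y))^2 \<le> t * (norm x)^2 + (1-t) * (norm y)^2"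
      using sq_norm_convex[of t x y] t by simp
    then show "j (t *\<^sub>R x + (1-t) *\<^sub>R y) \<le> ereal t * j x + ereal (1-t) * j y"
      by (simp add: j_def)
  qed
  moreover have "ereal (qf bf x) \<le> j x" for x using q_bnd[of x] by (simp add: j_def)
  ultimately have "j \<in> convex_majorants bf" unfolding convex_majorants_def by blast
  then have "j = f" using mini inf by simp
  then have "j 0 = \<infinity>" using inf[of 0] by simp
  then show False by (simp add: j_def)
qed

lemma lemE: "\<exists>a. f a = ereal (qf bf a) \<and> qf bf (x0 - a) \<le> 0"
proof -
  obtain y0 where y0: "f y0 \<noteq> \<infinity>" using dom_ne by blast
  define D' where "D' = {u. f (u + x0) \<noteq> \<infinity>}"
  define G where "G u = real_of_ereal (f (u + x0)) - bf u x0 - qf bf x0" for u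
  have "\<exists>\<phi>. bounded_linear \<phi> \<and> (\<forall>u\<in>D'. \<forall>w. \<phi> u - \<phi> w \<le> G u + (norm w)^2/2)"
  proof (rule sandwich[of "y0 - x0"])
    show "y0 - x0 \<in> D'" using y0 by (simp add: D'_def)
  next
    fix u v and t :: real assume uv: "u \<in> D'" "v \<in> D'" and t: "0 \<le> t" "t \<le> 1"
    have e: "(t *\<^sub>R u + (1-t) *\<^sub>R v) + x0 = t *\<^sub>R (u + x0) + (1-t) *\<^sub>R (v + x0)"
      by (simp add: algebra_simps)
    have c: "f (t *\<^sub>R (u + x0) + (1-t) *\<^sub>R (v + x0)) \<noteq> \<infinity> \<and>
      real_of_ereal (f (t *\<^sub>R (u + x0) + (1-t) *\<^sub>R (v + x0))) \<le> t * real_of_ereal (f (u + x0)) + (1-t) * real_of_ereal (f (v + x0))"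
      using Fconv[of "u + x0" "v + x0" t] uv t unfolding D'_def by auto
    have b: "bf (t *\<^sub>R u + (1-t) *\<^sub>R v) x0 = t * bf u x0 + (1-t) * bf v x0" by (simp add: bils)
    show "t *\<^sub>R u + (1-t) *\<^sub>R v \<in> D' \<and> G (t *\<^sub>R u + (1-t) *\<^sub>R v) \<le> t * G u + (1-t) * G v"
      unfolding D'_def G_def e b using c by (simp add: algebra_simps)
  next
    fix u assume u: "u \<in> D'"
    have "ereal (qf bf (u + x0)) \<le> ereal (real_of_ereal (f (u + x0)))"
      using f_ge[of "u + x0"] fD[of "u + x0"] u unfolding D'_def by simp
    then have "qf bf u + bf u x0 + qf bf x0 \<le> real_of_ereal (f (u + x0))" unfolding q_add by simp
    then show "0 \<le> G u + (norm u)^2/2" using q_bnd[of u] unfolding G_def by (simp add: abs_le_iff)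
  qed
  then obtain \<phi> where \<phi>: "bounded_linear \<phi>" and key0: "\<And>u w. u \<in> D' \<Longrightarrow> \<phi> u - \<phi> w \<le> G u + (norm w)^2/2"
    by blast
  obtain b where b: "\<phi> = (\<lambda>x. bf x b)" using surj[OF \<phi>] by blast
  have key: "bf u b - bf w b \<le> G u + (norm w)^2/2" if "u \<in> D'" for u w
    using key0[OF that, of w] unfolding b by simp
  have main: "bf u b + (norm b)^2/2 \<le> G u" if u: "u \<in> D'" for u
  proof -
    define d where "d = G u - bf u b"
    have d0: "0 \<le> d" using key[OF u, of 0] by (simp add: d_def bils)
    have sd: "s^2/2 \<le> d" if s: "0 \<le> s" "s < norm b" for s
    proof -
      obtain x where x: "s * norm x < \<bar>bf x b\<bar>" using norming[OF s] by blast
      then have x0: "x \<noteq> 0" by (auto simp: bils)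
      define n where "n = norm x"
      have n: "0 < n" using x0 by (simp add: n_def)
      have big: "s^2 \<le> (s/n) * \<bar>bf x b\<bar>"
      proof -
        have "(s/n) * (s * n) \<le> (s/n) * \<bar>bf x b\<bar>"
          using x s n by (intro mult_left_mono) (auto simp: n_def)
        then show ?thesis using n by (simp add: power2_eq_square)
      qed
      obtain w where w: "norm w = s" "bf w b = - ((s/n) * \<bar>bf x b\<bar>)"
      proof (cases "0 \<le> bf x b")
        case True
        show ?thesis
          by (rule that[of "- (s/n) *\<^sub>R x"]) (use True n s in \<open>auto simp: bils n_def\<close>)
      next
        case False
        show ?thesis
          by (rule that[of "(s/n) *\<^sub>R x"]) (use False n s in \<open>auto simp: bils n_def\<close>)
      qed
      have "bf u b - bf w b \<le> G u + s^2/2" using key[OF u, of w] w(1) by simp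
      then show ?thesis using big w(2) unfolding d_def by simp
    qed
    have "norm b \<le> sqrt (2*d)"
    proof (rule dense_le)
      fix s assume s: "s < norm b"
      show "s \<le> sqrt (2*d)"
      proof (cases "0 \<le> s")
        case True
        then have "s^2 \<le> 2*d" using sd[OF True s] by simp
        then show ?thesis by (rule real_le_rsqrt)
      next
        case False then show ?thesis using d0 by (smt (verit) real_sqrt_ge_zero)
      qed
    qed
    then have "(norm b)^2 \<le> (sqrt (2*d))^2" by (intro power_mono) auto
    then have "(norm b)^2 \<le> 2*d" using d0 by simp
    then show ?thesis unfolding d_def by simp
  qed
  define z where "z = x0 + b"
  have hz: "bf y z - qf bf z \<le> real_of_ereal (f y)" if y: "f y \<noteq> \<infinity>" for y
  proof -
    have "y - x0 \<in> D'" using y by (simp add: D'_def)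
    from main[OF this] have m: "bf (y - x0) b + (norm b)^2/2 \<le> real_of_ereal (f y) - bf (y - x0) x0 - qf bf x0"
      unfolding G_def by simp
    have e1: "bf (y - x0) b = bf y b - bf x0 b" "bf (y - x0) x0 = bf y x0 - 2 * qf bf x0"
      by (simp_all add: bils qf_def)
    have e2: "bf y z = bf y x0 + bf y b" "qf bf z = qf bf x0 + bf x0 b + qf bf b"
      unfolding z_def by (simp_all add: bils q_add)
    show ?thesis using m q_bnd[of b] unfolding e1 e2 by (simp add: abs_le_iff)
  qed
  have fz: "f z = ereal (qf bf z)" using lemC[OF y0 hz] by blast
  have "b \<in> D'" using fz by (simp add: D'_def z_def add.commute)
  from main[OF this] have "bf b b + (norm b)^2/2 \<le> real_of_ereal (f z) - bf b x0 - qf bf x0"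
    unfolding G_def by (simp add: z_def add.commute)
  moreover have "real_of_ereal (f z) = qf bf x0 + bf x0 b + qf bf b" using fz unfolding z_def q_add by simp
  moreover have "bf b b = 2 * qf bf b" by (simp add: qf_def)
  ultimately have "2 * qf bf b + (norm b)^2/2 \<le> qf bf b"
    using sym[of b x0] by simp
  moreover have "0 \<le> (norm b)^2/2" by simp
  ultimately have "qf bf b \<le> 0" by linarith
  then show ?thesis using fz unfolding z_def by (intro exI[of _ "x0 + b"]) (simp add: q_neg)
qed

end

end

end

theorem mainTheorem16:
  fixes bf :: "'a::banach \<Rightarrow> 'a \<Rightarrow> real" and f :: "'a \<Rightarrow> ereal"
  assumes "SSDB bf"
    and "f \<in> convex_majorants bf"
    and "\<forall>g\<in>convex_majorants bf. (\<forall>x. g x \<le> f x) \<longrightarrow> g = f"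
  shows "\<exists>M. max_q_positive bf M \<and> f = Phi bf M"
proof -
  note S = assms(1) and maj = assms(2) and mini = assms(3)
  define M where "M = {a. f a = ereal (qf bf a)}"
  have E: "\<exists>a\<in>M. qf bf (x - a) \<le> 0" for x using lemE[OF S maj mini, of x] unfolding M_def by blast
  have PhiLe: "Phi bf M x \<le> f x" for x
    unfolding Phi_def by (rule SUP_least) (use lemB[OF S maj] in \<open>auto simp: M_def\<close>)
  have PhiGe: "ereal (qf bf x) \<le> Phi bf M x" for x
  proof -
    obtain a where a: "a \<in> M" "qf bf (x - a) \<le> 0" using E by blast
    have "qf bf x \<le> bf x a - qf bf a" using a(2) q_diff[OF S, of x a] by simp
    also have "ereal (bf x a - qf bf a) \<le> Phi bf M x" unfolding Phi_def using a(1) by (rule SUP_upper)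
    finally show ?thesis by simp
  qed
  have conv: "convex_ext (Phi bf M)" unfolding convex_ext_def
  proof (intro conjI allI impI)
    fix x show "Phi bf M x \<noteq> -\<infinity>" using PhiGe[of x] by auto
  next
    fix x y :: 'a and t :: real assume t: "0 < t \<and> t < 1"
    show "Phi bf M (t *\<^sub>R x + (1-t) *\<^sub>R y) \<le> ereal t * Phi bf M x + ereal (1-t) * Phi bf M y"
      unfolding Phi_def
    proof (rule SUP_least)
      fix a assume a: "a \<in> M"
      have "ereal (bf (t *\<^sub>R x + (1-t) *\<^sub>R y) a - qf bf a) = ereal t * ereal (bf x a - qf bf a) + ereal (1-t) * ereal (bf y a - qf bf a)"
        by (simp add: bils[OF S] algebra_simps)
      also have "\<dots> \<le> ereal t * (SUP a\<in>M. ereal (bf x a - qf bf a)) + ereal (1-t) * (SUP a\<in>M. ereal (bf y a - qf bf a))"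
        using t a by (intro add_mono ereal_mult_left_mono SUP_upper) auto
      finally show "ereal (bf (t *\<^sub>R x + (1-t) *\<^sub>R y) a - qf bf a) \<le> ereal t * (SUP a\<in>M. ereal (bf x a - qf bf a)) + ereal (1-t) * (SUP a\<in>M. ereal (bf y a - qf bf a))" .
    qed
  qed
  have "Phi bf M \<in> convex_majorants bf" unfolding convex_majorants_def using conv PhiGe by blast
  then have Phif: "Phi bf M = f" using mini PhiLe by blast
  have Mne: "M \<noteq> {}" using E by blast
  have qp: "q_positive bf M" unfolding q_positive_def using Mne lemA[OF S maj] by (auto simp: M_def)
  have "max_q_positive bf M" unfolding max_q_positive_def
  proof (intro conjI allI impI)
    show "q_positive bf M" by (rule qp)
  next
    fix A' assume A': "q_positive bf A' \<and> M \<subseteq> A'"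
    show "A' = M"
    proof
      show "A' \<subseteq> M"
      proof
        fix c assume c: "c \<in> A'"
        have "Phi bf M c \<le> ereal (qf bf c)" unfolding Phi_def
        proof (rule SUP_least)
          fix a assume a: "a \<in> M"
          then have "0 \<le> qf bf (c - a)" using A' c unfolding q_positive_def by blast
          then show "ereal (bf c a - qf bf a) \<le> ereal (qf bf c)" using q_diff[OF S, of c a] by simp
        qed
        then have "f c \<le> ereal (qf bf c)" using Phif by simp
        then have "f c = ereal (qf bf c)" using f_ge[OF S maj, of c] by simp
        then show "c \<in> M" by (simp add: M_def)
      qed
    qed (use A' in blast)
  qed
  then show ?thesis using Phif by blast
qed


end
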